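(* Let $R''\subseteq R\subseteq S_n$ be the top-$k$ partial rankings $R: a_1\succ\cdots\succ a_l\succ[n]\setminus\{a_1,\dots,a_l\}$ and $R'': a_1\succ\cdots\succ a_l\succ a_{l+1}\succ\cdots\succ a_m\succ[n]\setminus\{a_1,\dots,a_m\}$ with $l\le m$. Then for every $\sigma\in R$, $$d(\sigma,\Pi_{R''}(\sigma))=\big((n-l)-(m-l)\big)(m-l)+\binom{m-l}2-d\big(A_R(\sigma),\Pi_{R''}(A_R(\sigma))\big).$$
   Context: $S_n$ is the symmetric group on $[n]$; $\sigma\in S_n$ is identified with the full ranking $\sigma(1)\succ\cdots\succ\sigma(n)$. For distinct items $x,y$, $\{x,y\}$ is discordant for $\sigma,\tau$ if $(\sigma^{-1}(x)-\sigma^{-1}(y))(\tau^{-1}(x)-\tau^{-1}(y))<0$. The Kendall distance $d(\sigma,\tau)$ is the number of unordered discordant pairs. For $0\le k\le n$ and distinct $c_1,\dots,c_k\in[n]$, the top-$k$ partial ranking $Q$: $c_1\succ\cdots\succ c_k\succ[n]\setminus\{c_1,\dots,c_k\}$ is the set $\{\sigma\in S_n:\sigma(i)=c_i,\ i\le k\}$; its antithetic operator $A_Q:Q\to Q$ is $A_Q(\sigma)(i)=c_i$ for $i\le k$ and $A_Q(\sigma)(k+j)=\sigma(n+1-j)$ for $j=1,\dots,n-k$. For $\tau\in S_n$, $\Pi_Q(\tau)$ denotes the unique element of $Q$ minimising $\rho\mapsto d(\rho,\tau)$ over $\rho\in Q$. *)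

theory Defs
  imports "HOL-Combinatorics.Permutations"
begin

text \<open>A full ranking of the items [n] = {1..n} is a permutation sigma of {1..n}
  (identity outside {1..n}); sigma i is the item at position i.\<close>

definition kendall :: "nat \<Rightarrow> (nat \<Rightarrow> nat) \<Rightarrow> (nat \<Rightarrow> nat) \<Rightarrow> nat" where
  "kendall n \<sigma> \<tau> = card {(x, y). x \<in> {1..n} \<and> y \<in> {1..n} \<and> x < y \<and>
      (int (inv \<sigma> x) - int (inv \<sigma> y)) * (int (inv \<tau> x) - int (inv \<tau> y)) < 0}"

definition topk :: "nat \<Rightarrow> nat list \<Rightarrow> (nat \<Rightarrow> nat) set" where
  "topk n cs = {\<sigma>. \<sigma> permutes {1..n} \<and> (\<forall>i<length cs. \<sigma> (i + 1) = cs ! i)}"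

definition antithetic :: "nat \<Rightarrow> nat list \<Rightarrow> (nat \<Rightarrow> nat) \<Rightarrow> (nat \<Rightarrow> nat)" where
  "antithetic n cs \<sigma> = (\<lambda>i. if 1 \<le> i \<and> i \<le> length cs then cs ! (i - 1)
      else if length cs < i \<and> i \<le> n then \<sigma> (n + 1 - (i - length cs)) else i)"

definition proj :: "nat \<Rightarrow> nat list \<Rightarrow> (nat \<Rightarrow> nat) \<Rightarrow> (nat \<Rightarrow> nat)" where
  "proj n cs \<tau> = (THE \<rho>. \<rho> \<in> topk n cs \<and> (\<forall>\<rho>'\<in>topk n cs. kendall n \<rho> \<tau> \<le> kendall n \<rho>' \<tau>))"

end

theory Submission
  imports Defs
begin



definition dset :: "nat \<Rightarrow> (nat\<Rightarrow>nat) \<Rightarrow> (nat\<Rightarrow>nat) \<Rightarrow> (nat\<Rightarrow>nat\<Rightarrow>bool) \<Rightarrow> (nat\<times>nat) set" where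
"dset n f g P = {(x,y). x \<in> {1..n} \<and> y \<in> {1..n} \<and> x < y \<and> P x y \<and> (int (f x) - int (f y)) * (int (g x) - int (g y)) < 0}"

lemma kendall_dset: "kendall n \<sigma> \<tau> = card (dset n (inv \<sigma>) (inv \<tau>) (\<lambda>_ _. True))"
  by (simp add: kendall_def dset_def)

lemma kendall_sym: "kendall n \<sigma> \<tau> = kendall n \<tau> \<sigma>"
  by (simp add: kendall_def mult.commute)

lemma dset_finite: "finite (dset n f g P)"
  by (rule finite_subset[of _ "{1..n}\<times>{1..n}"]) (auto simp: dset_def)

lemma kendall_split: "kendall n \<sigma> \<tau> = card (dset n (inv \<sigma>) (inv \<tau>) (\<lambda>x y. x\<in>S \<or> y\<in>S))
   + card (dset n (inv \<sigma>) (inv \<tau>) (\<lambda>x y. x\<notin>S \<and> y\<notin>S))"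
proof -
  have "dset n (inv \<sigma>) (inv \<tau>) (\<lambda>_ _. True) = dset n (inv \<sigma>) (inv \<tau>) (\<lambda>x y. x\<in>S \<or> y\<in>S)
     \<union> dset n (inv \<sigma>) (inv \<tau>) (\<lambda>x y. x\<notin>S \<and> y\<notin>S)" by (auto simp: dset_def)
  moreover have "dset n (inv \<sigma>) (inv \<tau>) (\<lambda>x y. x\<in>S \<or> y\<in>S)
     \<inter> dset n (inv \<sigma>) (inv \<tau>) (\<lambda>x y. x\<notin>S \<and> y\<notin>S) = {}" by (auto simp: dset_def)
  ultimately show ?thesis unfolding kendall_dset
    by (simp add: card_Un_disjoint dset_finite)
qed

lemma dset_cong:
  assumes "\<And>x y. x\<in>{1..n} \<Longrightarrow> y\<in>{1..n} \<Longrightarrow> x<y \<Longrightarrow> P x y \<Longrightarrow>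
     (f x < f y \<longleftrightarrow> f' x < f' y) \<and> (f y < f x \<longleftrightarrow> f' y < f' x)"
  shows "dset n f g P = dset n f' g P"
  using assms unfolding dset_def mult_less_0_iff by auto

lemma topk_facts:
  assumes "\<rho> \<in> topk n cs"
  shows "\<rho> permutes {1..n}" and "\<And>i. i < length cs \<Longrightarrow> inv \<rho> (cs!i) = i+1"
    and "\<And>y. y \<in> {1..n} \<Longrightarrow> y \<notin> set cs \<Longrightarrow> length cs < inv \<rho> y \<and> inv \<rho> y \<le> n"
    and "\<And>y. y \<in> {1..n} \<Longrightarrow> 1 \<le> inv \<rho> y \<and> inv \<rho> y \<le> n"
proof -
  show p: "\<rho> permutes {1..n}" using assms by (simp add: topk_def)
  show "inv \<rho> (cs!i) = i+1" if "i < length cs" for i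
    using assms that permutes_inv_eq[OF p] by (simp add: topk_def)
  show b: "1 \<le> inv \<rho> y \<and> inv \<rho> y \<le> n" if "y \<in> {1..n}" for y
    using permutes_in_image[OF permutes_inv[OF p], of y] that by auto
  show "length cs < inv \<rho> y \<and> inv \<rho> y \<le> n" if "y \<in> {1..n}" "y \<notin> set cs" for y
  proof (rule ccontr)
    assume "\<not> ?thesis"
    with b[OF that(1)] have j: "1 \<le> inv \<rho> y" "inv \<rho> y \<le> length cs" by auto
    have "\<rho> (inv \<rho> y) = y" using permutes_inv_eq[OF p] by blast
    moreover have "inv \<rho> y - 1 < length cs" using j by simp
    then have "\<rho> (inv \<rho> y - 1 + 1) = cs ! (inv \<rho> y - 1)"
      using assms unfolding topk_def by blast
    moreover have "inv \<rho> y - 1 + 1 = inv \<rho> y" using j by simp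
    ultimately have "y = cs ! (inv \<rho> y - 1)" by simp
    then have "y \<in> set cs" using j nth_mem[of "inv \<rho> y - 1" cs] by simp
    with that show False by simp
  qed
qed

lemma topk_inv_in_set:
  assumes "\<rho> \<in> topk n cs" "\<rho>' \<in> topk n cs" "x \<in> set cs"
  shows "inv \<rho> x = inv \<rho>' x" "inv \<rho> x \<le> length cs"
  using assms topk_facts(2)[OF assms(1)] topk_facts(2)[OF assms(2)]
  by (auto simp: in_set_conv_nth)



lemma P_indep:
  assumes "\<rho> \<in> topk n cs" "\<rho>' \<in> topk n cs"
  shows "dset n (inv \<rho>) g (\<lambda>x y. x \<in> set cs \<or> y \<in> set cs) = dset n (inv \<rho>') g (\<lambda>x y. x \<in> set cs \<or> y \<in> set cs)"
proof (rule dset_cong)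
  fix x y assume xy: "x\<in>{1..n}" "y\<in>{1..n}" "x \<in> set cs \<or> y \<in> set cs"
  note A = topk_inv_in_set[OF assms] topk_facts(3)[OF assms(1)] topk_facts(3)[OF assms(2)]
  show "(inv \<rho> x < inv \<rho> y \<longleftrightarrow> inv \<rho>' x < inv \<rho>' y) \<and> (inv \<rho> y < inv \<rho> x \<longleftrightarrow> inv \<rho>' y < inv \<rho>' x)"
  proof (cases "x \<in> set cs")
    case True
    then show ?thesis using A[of x] A[of y] xy by (cases "y \<in> set cs") fastforce+
  next
    case False
    then show ?thesis using A[of x] A[of y] xy by fastforce
  qed
qed



lemma order_det:
  fixes f g :: "nat \<Rightarrow> nat"
  assumes "inj_on f V" "inj_on g V" "f ` V = {a..b}" "g ` V = {a..b}"
    "\<And>x y. x\<in>V \<Longrightarrow> y\<in>V \<Longrightarrow> f x < f y \<longleftrightarrow> g x < g y" "x \<in> V"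
  shows "f x = g x"
proof -
  have c: "card {y\<in>V. h y < h x} = h x - a" if "inj_on h V" "h ` V = {a..b}" for h :: "nat \<Rightarrow> nat"
  proof -
    have hx: "h x \<in> {a..b}" using that assms(6) by blast
    have "h ` {y\<in>V. h y < h x} = {a..<h x}"
    proof
      show "h ` {y\<in>V. h y < h x} \<subseteq> {a..<h x}" using that by auto
      show "{a..<h x} \<subseteq> h ` {y\<in>V. h y < h x}"
      proof
        fix z assume z: "z \<in> {a..<h x}"
        then have "z \<in> h ` V" using that hx by auto
        then obtain y where "y \<in> V" "z = h y" by auto
        then show "z \<in> h ` {y\<in>V. h y < h x}" using z by auto
      qed
    qed
    then have "card (h ` {y\<in>V. h y < h x}) = h x - a" by simp
    moreover have "inj_on h {y\<in>V. h y < h x}" using that(1) by (rule inj_on_subset) auto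
    ultimately show ?thesis by (simp add: card_image)
  qed
  have "{y\<in>V. f y < f x} = {y\<in>V. g y < g x}" using assms(5,6) by auto
  then have "f x - a = g x - a" using c[OF assms(1,3)] c[OF assms(2,4)] by simp
  moreover have "a \<le> f x" "a \<le> g x" using assms(3,4,6) by auto
  ultimately show ?thesis by simp
qed



definition pairs2 :: "nat set \<Rightarrow> (nat\<times>nat) set" where
  "pairs2 A = {(x,y). x\<in>A \<and> y\<in>A \<and> x<y}"

lemma card_pairs2: assumes "finite A" shows "card (pairs2 A) = (card A) choose 2"
proof -
  have "bij_betw (\<lambda>(x,y). {x,y}) (pairs2 A) {B. B \<subseteq> A \<and> card B = 2}"
    unfolding bij_betw_def
  proof
    show "inj_on (\<lambda>(x,y). {x,y}) (pairs2 A)"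
      by (auto simp: inj_on_def pairs2_def doubleton_eq_iff)
    show "(\<lambda>(x,y). {x,y}) ` pairs2 A = {B. B \<subseteq> A \<and> card B = 2}"
    proof
      show "(\<lambda>(x,y). {x,y}) ` pairs2 A \<subseteq> {B. B \<subseteq> A \<and> card B = 2}"
        by (auto simp: pairs2_def)
      show "{B. B \<subseteq> A \<and> card B = 2} \<subseteq> (\<lambda>(x,y). {x,y}) ` pairs2 A"
      proof
        fix B assume "B \<in> {B. B \<subseteq> A \<and> card B = 2}"
        then obtain x y where B: "B = {x,y}" "x \<noteq> y" "B \<subseteq> A" by (auto simp: card_2_iff)
        show "B \<in> (\<lambda>(x,y). {x,y}) ` pairs2 A"
        proof (cases "x < y")
          case True
          then show ?thesis using B by (auto simp: pairs2_def image_iff intro!: bexI[of _ "(x,y)"])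
        next
          case False
          then have "y < x" using B by simp
          then show ?thesis using B by (auto simp: pairs2_def image_iff intro!: bexI[of _ "(y,x)"])
        qed
      qed
    qed
  qed
  then have "card (pairs2 A) = card {B. B \<subseteq> A \<and> card B = 2}" by (rule bij_betw_same_card)
  then show ?thesis using n_subsets[OF assms, of 2] by simp
qed

lemma choose2_add: "(a + b) choose 2 = (a choose 2) + a*b + (b choose 2)"
  by (induction b) (simp_all add: numeral_2_eq_2)




lemma sgn_helper:
  assumes "\<not> (int a - int b) * (int c - int d) < 0" "a \<noteq> b" "c \<noteq> d"
  shows "a < b \<longleftrightarrow> c < d"
  using assms by (cases "a<b"; cases "c<d") (auto simp: mult_less_0_iff)

lemma topk_img:
  assumes "\<rho> \<in> topk n cs" "distinct cs" "set cs \<subseteq> {1..n}"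
  shows "inv \<rho> ` ({1..n} - set cs) = {length cs+1..n}"
proof (rule card_seteq)
  show "finite {length cs+1..n}" by simp
  show "inv \<rho> ` ({1..n} - set cs) \<subseteq> {length cs + 1..n}"
    using topk_facts(3)[OF assms(1)] by force
  have p: "inv \<rho> permutes {1..n}" using topk_facts(1)[OF assms(1)] by (rule permutes_inv)
  have "card (inv \<rho> ` ({1..n} - set cs)) = card ({1..n} - set cs)"
    by (rule card_image, rule permutes_inj_on[OF p])
  also have "\<dots> = n - length cs" using assms(3) by (simp add: card_Diff_subset distinct_card[OF assms(2)])
  finally show "card {length cs + 1..n} \<le> card (inv \<rho> ` ({1..n} - set cs))" by simp
qed

lemma topk_order:
  assumes "\<rho> \<in> topk n cs" "\<tau> permutes {1..n}"
    "dset n (inv \<rho>) (inv \<tau>) (\<lambda>x y. x \<notin> set cs \<and> y \<notin> set cs) = {}"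
    "x \<in> {1..n} - set cs" "y \<in> {1..n} - set cs"
  shows "inv \<rho> x < inv \<rho> y \<longleftrightarrow> inv \<tau> x < inv \<tau> y"
proof (cases "x = y")
  case True then show ?thesis by simp
next
  case False
  have i1: "inv \<rho> x \<noteq> inv \<rho> y"
    using False permutes_inj[OF permutes_inv[OF topk_facts(1)[OF assms(1)]]] by (auto dest: injD)
  have i2: "inv \<tau> x \<noteq> inv \<tau> y"
    using False permutes_inj[OF permutes_inv[OF assms(2)]] by (auto dest: injD)
  show ?thesis
  proof (cases "x < y")
    case True
    then have "(x,y) \<notin> dset n (inv \<rho>) (inv \<tau>) (\<lambda>x y. x \<notin> set cs \<and> y \<notin> set cs)" using assms(3) by simp
    then have "\<not> (int (inv \<rho> x) - int (inv \<rho> y)) * (int (inv \<tau> x) - int (inv \<tau> y)) < 0"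
      using True assms(4,5) by (auto simp: dset_def)
    then show ?thesis using sgn_helper i1 i2 by blast
  next
    case F: False
    then have "y < x" using False by simp
    then have "(y,x) \<notin> dset n (inv \<rho>) (inv \<tau>) (\<lambda>x y. x \<notin> set cs \<and> y \<notin> set cs)" using assms(3) by simp
    then have "\<not> (int (inv \<rho> y) - int (inv \<rho> x)) * (int (inv \<tau> y) - int (inv \<tau> x)) < 0"
      using \<open>y < x\<close> assms(4,5) by (auto simp: dset_def)
    then have "inv \<rho> y < inv \<rho> x \<longleftrightarrow> inv \<tau> y < inv \<tau> x" using sgn_helper i1 i2 by metis
    then show ?thesis using i1 i2 by linarith
  qed
qed




lemma proj_props:
  assumes tau: "\<tau> permutes {1..n}" and dc: "distinct cs" and sc: "set cs \<subseteq> {1..n}"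
  shows "proj n cs \<tau> \<in> topk n cs"
    and "\<And>\<rho>. \<rho> \<in> topk n cs \<Longrightarrow> kendall n (proj n cs \<tau>) \<tau> = card (dset n (inv \<rho>) (inv \<tau>) (\<lambda>x y. x \<in> set cs \<or> y \<in> set cs))"
proof -
  define m where "m = length cs"
  define U where "U = {1..n::nat}"
  define V where "V = U - set cs"
  define t where "t = inv \<tau>"
  have tinj: "inj_on t U" unfolding t_def by (rule permutes_inj_on[OF permutes_inv[OF tau]])
  have fV: "finite V" unfolding V_def U_def by simp
  have mn: "m \<le> n"
  proof -
    have "card (set cs) \<le> card {1..n}" using sc by (intro card_mono) auto
    then show ?thesis using distinct_card[OF dc] unfolding m_def by simp
  qed
  have cardV: "card V = n - m" unfolding V_def U_def m_def
    using sc by (simp add: card_Diff_subset distinct_card[OF dc])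
  define idx where "idx x = (THE i. i < m \<and> cs!i = x)" for x
  have idx1: "idx x < m \<and> cs!(idx x) = x" if "x \<in> set cs" for x
    unfolding idx_def m_def by (rule theI'[OF distinct_Ex1[OF dc that]])
  have idx2: "idx (cs!i) = i" if "i < m" for i
    unfolding idx_def using that dc unfolding m_def
    by (intro the_equality) (auto simp: nth_eq_iff_index_eq)
  define c where "c x = card {y\<in>V. t y < t x}" for x
  have cmono: "c x < c y" if "x \<in> V" "y \<in> V" "t x < t y" for x y
    unfolding c_def
  proof (rule psubset_card_mono)
    show "finite {ya \<in> V. t ya < t y}" using fV by simp
    show "{y \<in> V. t y < t x} \<subset> {ya \<in> V. t ya < t y}" using that by auto
  qed
  have cbound: "c x < n - m" if "x \<in> V" for x
  proof -
    have "{y\<in>V. t y < t x} \<subseteq> V - {x}" by auto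
    then have "c x \<le> card (V - {x})" unfolding c_def using fV by (intro card_mono) auto
    also have "\<dots> = card V - 1" using that fV by simp
    finally show ?thesis using cardV that fV card_gt_0_iff[of V] by auto
  qed
  define p where "p x = (if x \<in> set cs then idx x + 1 else if x \<in> U then m + 1 + c x else x)" for x
  have pinj: "inj_on p U"
  proof (rule inj_onI)
    fix x y assume xy: "x \<in> U" "y \<in> U" "p x = p y"
    show "x = y"
    proof (cases "x \<in> set cs")
      case True
      show ?thesis
      proof (cases "y \<in> set cs")
        case True
        then have "idx x = idx y" using \<open>x \<in> set cs\<close> xy unfolding p_def by simp
        then show ?thesis using idx1[of x] idx1[of y] \<open>x \<in> set cs\<close> True by metis
      next
        case False
        then show ?thesis using idx1[of x] True xy unfolding p_def by auto
      qed
    next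
      case False
      show ?thesis
      proof (cases "y \<in> set cs")
        case True
        then show ?thesis using idx1[of y] False xy unfolding p_def by auto
      next
        case F2: False
        then have xV: "x \<in> V" and yV: "y \<in> V" using False xy unfolding V_def by auto
        have "c x = c y" using xy False F2 unfolding p_def by simp
        then have "t x = t y" using cmono[OF xV yV] cmono[OF yV xV] by (metis less_irrefl not_less_iff_gr_or_eq)
        then show ?thesis using tinj xy by (auto dest: inj_onD)
      qed
    qed
  qed
  have pimg: "p ` U \<subseteq> U"
  proof
    fix z assume "z \<in> p ` U"
    then obtain x where x: "x \<in> U" "z = p x" by auto
    show "z \<in> U"
    proof (cases "x \<in> set cs")
      case True then show ?thesis using idx1[of x] mn x unfolding p_def U_def by auto
    next
      case False
      then have "x \<in> V" using x unfolding V_def by auto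
      then show ?thesis using cbound[of x] False x unfolding p_def U_def by auto
    qed
  qed
  have pperm: "p permutes U"
  proof (rule bij_imp_permutes)
    show "bij_betw p U U" unfolding bij_betw_def
      using pinj endo_inj_surj[OF _ pimg pinj] by (simp add: U_def)
    show "p x = x" if "x \<notin> U" for x using that sc unfolding p_def U_def by auto
  qed
  define \<rho>0 where "\<rho>0 = inv p"
  have r0inv: "inv \<rho>0 = p" unfolding \<rho>0_def by (rule permutes_inv_inv[OF pperm])
  have r0topk: "\<rho>0 \<in> topk n cs"
    unfolding topk_def
  proof (intro CollectI conjI allI impI)
    show "\<rho>0 permutes {1..n}" unfolding \<rho>0_def using permutes_inv[OF pperm] U_def by simp
    fix i assume "i < length cs"
    then have "p (cs!i) = i + 1" using idx2[of i] unfolding p_def m_def by simp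
    then show "\<rho>0 (i + 1) = cs ! i" unfolding \<rho>0_def using permutes_inv_eq[OF pperm] by blast
  qed
  have Q0: "dset n p t (\<lambda>x y. x \<notin> set cs \<and> y \<notin> set cs) = {}"
  proof -
    have "False" if "x \<in> V" "y \<in> V" "x < y" "(int (p x) - int (p y)) * (int (t x) - int (t y)) < 0" for x y
    proof -
      have "x \<noteq> y" using that by simp
      then have "t x \<noteq> t y" using tinj that(1,2) unfolding V_def by (auto dest: inj_onD)
      moreover have "p x = m + 1 + c x" "p y = m + 1 + c y" using that unfolding p_def V_def by auto
      ultimately show False using cmono[OF that(1,2)] cmono[OF that(2,1)] that(4)
        by (cases "t x < t y") (auto simp: mult_less_0_iff)
    qed
    then show ?thesis unfolding dset_def V_def U_def by auto
  qed
  have keyP: "kendall n \<rho> \<tau> = card (dset n (inv \<rho>') t (\<lambda>x y. x \<in> set cs \<or> y \<in> set cs))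
      + card (dset n (inv \<rho>) t (\<lambda>x y. x \<notin> set cs \<and> y \<notin> set cs))"
    if "\<rho> \<in> topk n cs" "\<rho>' \<in> topk n cs" for \<rho> \<rho>'
    using kendall_split[of n \<rho> \<tau> "set cs"] P_indep[OF that, of t] unfolding t_def by simp
  have k0: "kendall n \<rho>0 \<tau> = card (dset n (inv \<rho>) t (\<lambda>x y. x \<in> set cs \<or> y \<in> set cs))"
    if "\<rho> \<in> topk n cs" for \<rho>
    using keyP[OF r0topk that] Q0 r0inv by simp
  have mini: "kendall n \<rho>0 \<tau> \<le> kendall n \<rho>' \<tau>" if "\<rho>' \<in> topk n cs" for \<rho>'
    using keyP[OF that r0topk] k0[OF r0topk] by simp
  have uniq: "\<rho> = \<rho>0" if "\<rho> \<in> topk n cs" "kendall n \<rho> \<tau> \<le> kendall n \<rho>0 \<tau>" for \<rho>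
  proof -
    have "card (dset n (inv \<rho>) t (\<lambda>x y. x \<notin> set cs \<and> y \<notin> set cs)) = 0"
      using keyP[OF that(1) r0topk] k0[OF r0topk] that(2) by simp
    then have Qr: "dset n (inv \<rho>) t (\<lambda>x y. x \<notin> set cs \<and> y \<notin> set cs) = {}"
      using dset_finite by simp
    have Q0': "dset n (inv \<rho>0) t (\<lambda>x y. x \<notin> set cs \<and> y \<notin> set cs) = {}" using Q0 r0inv by simp
    note rt = that(1)
    have eq: "inv \<rho> x = inv \<rho>0 x" for x
    proof (cases "x \<in> U")
      case False
      then show ?thesis
        using permutes_not_in[OF permutes_inv[OF topk_facts(1)[OF rt]]]
              permutes_not_in[OF permutes_inv[OF topk_facts(1)[OF r0topk]]] unfolding U_def by metis
    next
      case True
      show ?thesis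
      proof (cases "x \<in> set cs")
        case True
        then show ?thesis using topk_inv_in_set[OF rt r0topk] by simp
      next
        case False
        then have xV: "x \<in> {1..n} - set cs" using \<open>x \<in> U\<close> unfolding U_def by simp
        show ?thesis
        proof (rule order_det[where V="{1..n} - set cs" and f="inv \<rho>" and g="inv \<rho>0" and a="length cs + 1" and b=n])
          show "inj_on (inv \<rho>) ({1..n} - set cs)"
            by (rule permutes_inj_on[OF permutes_inv[OF topk_facts(1)[OF rt]]])
          show "inj_on (inv \<rho>0) ({1..n} - set cs)"
            by (rule permutes_inj_on[OF permutes_inv[OF topk_facts(1)[OF r0topk]]])
          show "inv \<rho> ` ({1..n} - set cs) = {length cs + 1..n}" by (rule topk_img[OF rt dc sc])
          show "inv \<rho>0 ` ({1..n} - set cs) = {length cs + 1..n}" by (rule topk_img[OF r0topk dc sc])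
          show "(inv \<rho> y < inv \<rho> z) = (inv \<rho>0 y < inv \<rho>0 z)"
            if "y \<in> {1..n} - set cs" "z \<in> {1..n} - set cs" for y z
            using topk_order[OF \<open>\<rho> \<in> topk n cs\<close> tau _ that] topk_order[OF r0topk tau _ that] Qr Q0'
            unfolding t_def by simp
          show "x \<in> {1..n} - set cs" by (rule xV)
        qed
      qed
    qed
    then have "inv \<rho> = inv \<rho>0" by auto
    then show ?thesis
      using permutes_inv_inv[OF topk_facts(1)[OF that(1)]] permutes_inv_inv[OF topk_facts(1)[OF r0topk]] by metis
  qed
  have proj: "proj n cs \<tau> = \<rho>0"
    unfolding proj_def
  proof (rule the_equality)
    show "\<rho>0 \<in> topk n cs \<and> (\<forall>\<rho>'\<in>topk n cs. kendall n \<rho>0 \<tau> \<le> kendall n \<rho>' \<tau>)" using r0topk mini by blast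
    show "\<rho> = \<rho>0" if "\<rho> \<in> topk n cs \<and> (\<forall>\<rho>'\<in>topk n cs. kendall n \<rho> \<tau> \<le> kendall n \<rho>' \<tau>)" for \<rho>
      using that uniq r0topk by blast
  qed
  show "proj n cs \<tau> \<in> topk n cs" using proj r0topk by simp
  show "kendall n (proj n cs \<tau>) \<tau> = card (dset n (inv \<rho>) (inv \<tau>) (\<lambda>x y. x \<in> set cs \<or> y \<in> set cs))"
    if "\<rho> \<in> topk n cs" for \<rho> using k0[OF that] proj unfolding t_def by simp
qed




lemma noT:
  fixes f g :: "nat \<Rightarrow> nat"
  assumes "\<And>z. z\<in>T \<Longrightarrow> g z = f z \<and> f z \<le> l" "\<And>z. z\<in>U \<Longrightarrow> z \<notin> T \<Longrightarrow> l < f z \<and> l < g z"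
    "x\<in>U" "y\<in>U" "x\<in>T \<or> y\<in>T"
  shows "\<not> (int (f x) - int (f y)) * (int (g x) - int (g y)) < 0"
proof (cases "x \<in> T")
  case True
  show ?thesis
  proof (cases "y \<in> T")
    case True
    then show ?thesis using assms(1)[of x] assms(1)[of y] \<open>x \<in> T\<close> by (simp add: mult_less_0_iff)
  next
    case False
    then show ?thesis using assms(1)[of x] assms(2)[of y] \<open>x \<in> T\<close> assms(4) by (auto simp add: mult_less_0_iff)
  qed
next
  case False
  then have "y \<in> T" using assms(5) by simp
  then show ?thesis using assms(1)[of y] assms(2)[of x] False assms(3) by (auto simp add: mult_less_0_iff)
qed

lemma flipT:
  fixes f g g' :: "nat \<Rightarrow> nat"
  assumes "f x \<noteq> f y" "g x \<noteq> g y" "g' x = N - g x" "g' y = N - g y" "g x \<le> N" "g y \<le> N"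
  shows "(int (f x) - int (f y)) * (int (g' x) - int (g' y)) < 0 \<longleftrightarrow>
         \<not> (int (f x) - int (f y)) * (int (g x) - int (g y)) < 0"
proof -
  have "int (g' x) - int (g' y) = - (int (g x) - int (g y))" using assms(3-6) by simp
  then show ?thesis using assms(1,2) by (cases "f x < f y"; cases "g x < g y") (auto simp: mult_less_0_iff)
qed




theorem lemma8:
  fixes n l :: nat and as :: "nat list" and \<sigma> :: "nat \<Rightarrow> nat"
  assumes "distinct as" and "set as \<subseteq> {1..n}" and "l \<le> length as"
    and "\<sigma> \<in> topk n (take l as)"
  shows "int (kendall n \<sigma> (proj n as \<sigma>)) =
      int ((n - l) - (length as - l)) * int (length as - l) + int ((length as - l) choose 2)
      - int (kendall n (antithetic n (take l as) \<sigma>) (proj n as (antithetic n (take l as) \<sigma>)))"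
proof -
  note dist = assms(1) and sub = assms(2) and lm = assms(3) and st = assms(4)
  define m where "m = length as"
  define U where "U = {1..n::nat}"
  define T where "T = set (take l as)"
  define S where "S = set as"
  have ltake: "length (take l as) = l" using lm by simp
  have sp: "\<sigma> permutes U" unfolding U_def by (rule topk_facts(1)[OF st])
  have dT: "distinct (take l as)" using dist by simp
  have TS: "T \<subseteq> S" unfolding T_def S_def by (rule set_take_subset)
  have mn: "m \<le> n"
  proof -
    have "card (set as) \<le> card {1..n}" using sub by (intro card_mono) auto
    then show ?thesis using distinct_card[OF dist] unfolding m_def by simp
  qed
  define h where "h i = (if l < i \<and> i \<le> n then n + 1 + l - i else i)" for i
  have hh: "h \<circ> h = id" by (rule ext) (auto simp: h_def)
  have bh: "bij h" by (rule o_bij[OF hh hh])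
  have hperm: "h permutes U"
  proof (rule bij_imp_permutes)
    have hi: "inj_on h U" using bij_is_inj[OF bh] by (rule inj_on_subset) simp
    have "h ` U \<subseteq> U" unfolding U_def h_def by auto
    then show "bij_betw h U U" unfolding bij_betw_def using hi endo_inj_surj[of U h] U_def by simp
    show "h x = x" if "x \<notin> U" for x using that unfolding U_def h_def by auto
  qed
  have invh: "inv h = h" by (rule inv_unique_comp[OF hh hh])
  have anti: "antithetic n (take l as) \<sigma> = \<sigma> \<circ> h"
  proof
    fix i
    show "antithetic n (take l as) \<sigma> i = (\<sigma> \<circ> h) i"
    proof (cases "1 \<le> i \<and> i \<le> l")
      case True
      have all: "\<forall>j<l. \<sigma> (j + 1) = take l as ! j" using st ltake unfolding topk_def by simp
      have "i - 1 < l" using True by arith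
      then have "\<sigma> (i - 1 + 1) = take l as ! (i - 1)" using all by blast
      then show ?thesis using True ltake unfolding antithetic_def h_def by auto
    next
      case False
      show ?thesis
      proof (cases "l < i \<and> i \<le> n")
        case True
        then have "n + 1 - (i - l) = n + 1 + l - i" by simp
        then show ?thesis using True False ltake unfolding antithetic_def h_def by auto
      next
        case F2: False
        then have "i \<notin> U" using False unfolding U_def by auto
        then have "\<sigma> i = i" using permutes_not_in[OF sp] by simp
        then show ?thesis using False F2 ltake unfolding antithetic_def h_def by auto
      qed
    qed
  qed
  define \<sigma>' where "\<sigma>' = \<sigma> \<circ> h"
  have sp': "\<sigma>' permutes U" unfolding \<sigma>'_def by (rule permutes_compose[OF hperm sp])
  have invs': "inv \<sigma>' = h \<circ> inv \<sigma>"
    unfolding \<sigma>'_def using o_inv_distrib[OF permutes_bij[OF sp] bh] invh by simp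
  define \<rho> where "\<rho> = proj n as \<sigma>"
  have rt: "\<rho> \<in> topk n as" unfolding \<rho>_def using proj_props(1)[OF sp[unfolded U_def] dist sub] .
  define r where "r = inv \<rho>"
  define t where "t = inv \<sigma>"
  define t' where "t' = inv \<sigma>'"
  define PS where "PS = (\<lambda>x y. x \<in> set as \<or> y \<in> set as)"
  define A where "A = dset n r t PS"
  define A' where "A' = dset n r t' PS"
  have K1: "kendall n \<sigma> (proj n as \<sigma>) = card A"
    unfolding A_def r_def t_def PS_def
    using kendall_sym proj_props(2)[OF sp[unfolded U_def] dist sub rt] by metis
  have K2: "kendall n (antithetic n (take l as) \<sigma>) (proj n as (antithetic n (take l as) \<sigma>)) = card A'"
    unfolding A'_def r_def t'_def PS_def anti \<sigma>'_def[symmetric]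
    using kendall_sym proj_props(2)[OF sp'[unfolded U_def] dist sub rt] by metis
  have FT: "t z = r z \<and> t' z = r z \<and> r z \<le> l" if zT: "z \<in> T" for z
  proof -
    obtain i where i: "i < l" "z = take l as ! i" using zT ltake unfolding T_def by (auto simp: in_set_conv_nth)
    have "t z = i + 1" unfolding t_def using topk_facts(2)[OF st, of i] i ltake by simp
    moreover have "r z = i + 1" unfolding r_def using topk_facts(2)[OF rt, of i] i lm by simp
    moreover have "t' z = h (t z)" unfolding t'_def invs' t_def by simp
    ultimately show ?thesis using i unfolding h_def by simp
  qed
  have FN: "l < r z \<and> l < t z \<and> t z \<le> n \<and> t' z = (n + 1 + l) - t z \<and> l < t' z" if zz: "z \<in> U" "z \<notin> T" for z
  proof -
    have tz: "l < t z \<and> t z \<le> n" unfolding t_def using topk_facts(3)[OF st, of z] zz ltake unfolding T_def U_def by simp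
    have "t' z = h (t z)" unfolding t'_def invs' t_def by simp
    then have t'z: "t' z = (n + 1 + l) - t z" using tz unfolding h_def by simp
    have "l < r z"
    proof (cases "z \<in> set as")
      case True
      then obtain i where i: "i < length as" "z = as ! i" by (auto simp: in_set_conv_nth)
      have "\<not> i < l"
      proof
        assume "i < l"
        then have "z \<in> T" unfolding T_def using i by (auto simp: in_set_conv_nth intro!: exI[of _ i])
        with zz show False by simp
      qed
      moreover have "r z = i + 1" unfolding r_def using topk_facts(2)[OF rt, of i] i by simp
      ultimately show ?thesis by simp
    next
      case False
      then show ?thesis unfolding r_def using topk_facts(3)[OF rt, of z] zz lm unfolding U_def by simp
    qed
    then show ?thesis using tz t'z by arith
  qed
  have rinj: "r x \<noteq> r y" if "x \<noteq> y" for x y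
    using that permutes_inj[OF permutes_inv[OF topk_facts(1)[OF rt]]] unfolding r_def by (auto dest: injD)
  have tinj: "t x \<noteq> t y" if "x \<noteq> y" for x y
    using that permutes_inj[OF permutes_inv[OF sp]] unfolding t_def by (auto dest: injD)
  have L1: "\<not> (int (r x) - int (r y)) * (int (g x) - int (g y)) < 0"
    if "g = t \<or> g = t'" "x \<in> U" "y \<in> U" "x \<in> T \<or> y \<in> T" for x y g
    by (rule noT[where T=T and U=U and l=l]) (use that FT FN in auto)
  have L2: "(int (r x) - int (r y)) * (int (t' x) - int (t' y)) < 0 \<longleftrightarrow>
         \<not> (int (r x) - int (r y)) * (int (t x) - int (t y)) < 0"
    if "x \<in> U" "y \<in> U" "x \<notin> T" "y \<notin> T" "x \<noteq> y" for x y
    by (rule flipT[where N="n+1+l"]) (use that FN[OF that(1,3)] FN[OF that(2,4)] rinj tinj in auto)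
  define W where "W = pairs2 (U - T) - pairs2 (U - S)"
  have disj: "A \<inter> A' = {}"
  proof -
    have "False" if "(x,y) \<in> A" "(x,y) \<in> A'" for x y
    proof -
      have xy: "x \<in> U" "y \<in> U" "x < y"
        and d1: "(int (r x) - int (r y)) * (int (t x) - int (t y)) < 0"
        and d2: "(int (r x) - int (r y)) * (int (t' x) - int (t' y)) < 0"
        using that unfolding A_def A'_def dset_def U_def by auto
      show False
      proof (cases "x \<in> T \<or> y \<in> T")
        case True then show ?thesis using L1[of t x y] xy d1 by auto
      next
        case False then show ?thesis using L2[of x y] xy d1 d2 by auto
      qed
    qed
    then show ?thesis by auto
  qed
  have un: "A \<union> A' = W"
  proof
    show "A \<union> A' \<subseteq> W"
    proof
      fix p assume p: "p \<in> A \<union> A'"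
      obtain x y where pxy: "p = (x,y)" by (cases p)
      have xy: "x \<in> U" "y \<in> U" "x < y" "x \<in> S \<or> y \<in> S"
        using p unfolding pxy A_def A'_def dset_def U_def PS_def S_def by auto
      have nT: "x \<notin> T \<and> y \<notin> T"
      proof (rule ccontr)
        assume "\<not> ?thesis"
        then have "x \<in> T \<or> y \<in> T" by auto
        then show False using L1[of t x y] L1[of t' x y] xy p unfolding pxy A_def A'_def dset_def by auto
      qed
      show "p \<in> W" unfolding pxy W_def pairs2_def using xy nT by auto
    qed
    show "W \<subseteq> A \<union> A'"
    proof
      fix p assume p: "p \<in> W"
      obtain x y where pxy: "p = (x,y)" by (cases p)
      have xy: "x \<in> U" "y \<in> U" "x < y" "x \<in> S \<or> y \<in> S" "x \<notin> T" "y \<notin> T"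
        using p unfolding pxy W_def pairs2_def by auto
      show "p \<in> A \<union> A'"
        using L2[of x y] xy unfolding pxy A_def A'_def dset_def U_def PS_def S_def by auto
    qed
  qed
  have fU: "finite U" unfolding U_def by simp
  have cardUT: "card (U - T) = n - l"
    using sub TS ltake distinct_card[OF dT] unfolding U_def T_def S_def
    by (subst card_Diff_subset) auto
  have cardUS: "card (U - S) = n - m"
    using sub distinct_card[OF dist] unfolding U_def S_def m_def
    by (subst card_Diff_subset) auto
  have sub2: "pairs2 (U - S) \<subseteq> pairs2 (U - T)" using TS unfolding pairs2_def by auto
  have fin2: "finite (pairs2 (U - S))"
    by (rule finite_subset[of _ "U \<times> U"]) (auto simp: pairs2_def fU)
  have "card A + card A' = card W"
    using disj un card_Un_disjoint[of A A'] dset_finite unfolding A_def A'_def by metis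
  also have "\<dots> = card (pairs2 (U - T)) - card (pairs2 (U - S))"
    unfolding W_def by (rule card_Diff_subset[OF fin2 sub2])
  also have "\<dots> = ((n - l) choose 2) - ((n - m) choose 2)"
    using card_pairs2[of "U - T"] card_pairs2[of "U - S"] fU cardUT cardUS by simp
  finally have eq0: "card A + card A' = ((n - l) choose 2) - ((n - m) choose 2)" .
  have nl: "(n - l) = (n - m) + (m - l)" using mn lm unfolding m_def by simp
  have eq: "card A + card A' = (n - m) * (m - l) + ((m - l) choose 2)"
    using eq0 choose2_add[of "n - m" "m - l"] unfolding nl by simp
  have nm: "(n - l) - (m - l) = n - m" using mn lm unfolding m_def by simp
  moreover have "int (card A) + int (card A') = int (n - m) * int (m - l) + int ((m - l) choose 2)"
    using eq by (metis of_nat_add of_nat_mult)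
  ultimately show ?thesis unfolding K1 K2 m_def[symmetric] nm by linarith
qed


end
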